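(* For any strategy profile $g$, any player $i$, any $t$, any $(a_{1:t-1},x^i_{1:t},a^i_t)$ of positive probability under $g$, and any $(\tilde x_t,\tilde a_t)\in\mathcal X\times\mathcal A$, $$P^g(X_t=\tilde x_t,A_t=\tilde a_t\mid a_{1:t-1},x^i_{1:t},a^i_t)=\mathbf 1\{\tilde x^i_t=x^i_t,\tilde a^i_t=a^i_t\}\,P^{g^{-i}}(X^{-i}_t=\tilde x^{-i}_t,A^{-i}_t=\tilde a^{-i}_t\mid a_{1:t-1}),$$ so this conditional probability depends on the private history only through $x^i_t$, and on the profile only through $g^{-i}$.
   Context: Model: players $\mathcal N=\{1,\dots,N\}$, horizon $\mathcal T=\{1,\dots,T\}$, finite type sets $\mathcal X^i$ and action sets $\mathcal A^i$, $\mathcal X=\times_i\mathcal X^i$, $\mathcal A=\times_i\mathcal A^i$. Types evolve as $P(x_1)=\prod_iQ^i_1(x^i_1)$ and $P(x_{t+1}\mid x_{1:t},a_{1:t})=\prod_iQ^i_{t+1}(x^i_{t+1}\mid x^i_t,a_t)$ for known kernels (each may depend on the full action profile). Player $i$ privately observes its own types and all actions are public; a strategy $g^i$ specifies $g^i_t(\cdot\mid a_{1:t-1},x^i_{1:t})\in\mathcal P(\mathcal A^i)$, and players randomize independently given their information. $P^g$ denotes probability under profile $g$; $-i$ denotes all players except $i$; $P^{g^{-i}}(\cdot\mid a_{1:t-1})$ denotes a conditional probability of the other players' current types and actions given the public history which depends only on $g^{-i}$. *)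

theory Defs
  imports Complex_Main
begin

text \<open>
  Time t (1-based) corresponds to list index t - 1.
  Q1 i : initial type distribution of player i.
  Q i t' x a x' : Q^i_{t'}(x' | x, a), the kernel for time t' (t' >= 2),
     given the previous own type x and the previous full action profile a.
  A strategy profile g: g i ah xih ai = g^i_t(ai | a_{1:t-1}, x^i_{1:t}),
     where ah = a_{1:t-1} (length t-1) and xih = x^i_{1:t} (length t).
\<close>

definition type_profiles :: "('n \<Rightarrow> 'x set) \<Rightarrow> ('n \<Rightarrow> 'x) set" where
  "type_profiles Xs = {x. \<forall>i. x i \<in> Xs i}"

definition action_profiles :: "('n \<Rightarrow> 'a set) \<Rightarrow> ('n \<Rightarrow> 'a) set" where
  "action_profiles As = {a. \<forall>i. a i \<in> As i}"

definition valid_model ::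
  "('n::finite \<Rightarrow> 'x set) \<Rightarrow> ('n \<Rightarrow> 'a set) \<Rightarrow> nat \<Rightarrow>
   ('n \<Rightarrow> 'x \<Rightarrow> real) \<Rightarrow> ('n \<Rightarrow> nat \<Rightarrow> 'x \<Rightarrow> ('n \<Rightarrow> 'a) \<Rightarrow> 'x \<Rightarrow> real) \<Rightarrow> bool" where
  "valid_model Xs As T Q1 Q \<longleftrightarrow>
     (\<forall>i. finite (Xs i) \<and> finite (As i)) \<and>
     (\<forall>i. (\<forall>x\<in>Xs i. 0 \<le> Q1 i x) \<and> (\<Sum>x\<in>Xs i. Q1 i x) = 1) \<and>
     (\<forall>i t x a. 2 \<le> t \<and> t \<le> T \<and> x \<in> Xs i \<and> a \<in> action_profiles As \<longrightarrow>
        (\<forall>x'\<in>Xs i. 0 \<le> Q i t x a x') \<and> (\<Sum>x'\<in>Xs i. Q i t x a x') = 1)"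

definition valid_strategy ::
  "('n::finite \<Rightarrow> 'x set) \<Rightarrow> ('n \<Rightarrow> 'a set) \<Rightarrow> nat \<Rightarrow>
   ('n \<Rightarrow> ('n \<Rightarrow> 'a) list \<Rightarrow> 'x list \<Rightarrow> 'a \<Rightarrow> real) \<Rightarrow> bool" where
  "valid_strategy Xs As T g \<longleftrightarrow>
     (\<forall>i ah xih. length xih = Suc (length ah) \<and> length xih \<le> T \<and>
        set ah \<subseteq> action_profiles As \<and> set xih \<subseteq> Xs i \<longrightarrow>
        (\<forall>ai\<in>As i. 0 \<le> g i ah xih ai) \<and> (\<Sum>ai\<in>As i. g i ah xih ai) = 1)"

definition trajs :: "('n \<Rightarrow> 'x set) \<Rightarrow> ('n \<Rightarrow> 'a set) \<Rightarrow> nat \<Rightarrow>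
   (('n \<Rightarrow> 'x) list \<times> ('n \<Rightarrow> 'a) list) set" where
  "trajs Xs As T = {(xs, as). length xs = T \<and> length as = T \<and>
      set xs \<subseteq> type_profiles Xs \<and> set as \<subseteq> action_profiles As}"

definition traj_weight ::
  "('n::finite \<Rightarrow> 'x \<Rightarrow> real) \<Rightarrow> ('n \<Rightarrow> nat \<Rightarrow> 'x \<Rightarrow> ('n \<Rightarrow> 'a) \<Rightarrow> 'x \<Rightarrow> real) \<Rightarrow>
   ('n \<Rightarrow> ('n \<Rightarrow> 'a) list \<Rightarrow> 'x list \<Rightarrow> 'a \<Rightarrow> real) \<Rightarrow>
   ('n \<Rightarrow> 'x) list \<Rightarrow> ('n \<Rightarrow> 'a) list \<Rightarrow> real" where
  "traj_weight Q1 Q g xs as =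
     (\<Prod>i\<in>UNIV. Q1 i (hd xs i)) *
     (\<Prod>s<length as. \<Prod>i\<in>UNIV. g i (take s as) (map (\<lambda>x. x i) (take (Suc s) xs)) ((as ! s) i)) *
     (\<Prod>s<length xs - 1. \<Prod>i\<in>UNIV. Q i (s + 2) ((xs ! s) i) (as ! s) ((xs ! Suc s) i))"

definition game_prob ::
  "('n::finite \<Rightarrow> 'x set) \<Rightarrow> ('n \<Rightarrow> 'a set) \<Rightarrow> nat \<Rightarrow>
   ('n \<Rightarrow> 'x \<Rightarrow> real) \<Rightarrow> ('n \<Rightarrow> nat \<Rightarrow> 'x \<Rightarrow> ('n \<Rightarrow> 'a) \<Rightarrow> 'x \<Rightarrow> real) \<Rightarrow>
   ('n \<Rightarrow> ('n \<Rightarrow> 'a) list \<Rightarrow> 'x list \<Rightarrow> 'a \<Rightarrow> real) \<Rightarrow>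
   (('n \<Rightarrow> 'x) list \<times> ('n \<Rightarrow> 'a) list \<Rightarrow> bool) \<Rightarrow> real" where
  "game_prob Xs As T Q1 Q g E =
     (\<Sum>h\<in>{h\<in>trajs Xs As T. E h}. traj_weight Q1 Q g (fst h) (snd h))"

definition game_cond_prob ::
  "('n::finite \<Rightarrow> 'x set) \<Rightarrow> ('n \<Rightarrow> 'a set) \<Rightarrow> nat \<Rightarrow>
   ('n \<Rightarrow> 'x \<Rightarrow> real) \<Rightarrow> ('n \<Rightarrow> nat \<Rightarrow> 'x \<Rightarrow> ('n \<Rightarrow> 'a) \<Rightarrow> 'x \<Rightarrow> real) \<Rightarrow>
   ('n \<Rightarrow> ('n \<Rightarrow> 'a) list \<Rightarrow> 'x list \<Rightarrow> 'a \<Rightarrow> real) \<Rightarrow>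
   (('n \<Rightarrow> 'x) list \<times> ('n \<Rightarrow> 'a) list \<Rightarrow> bool) \<Rightarrow>
   (('n \<Rightarrow> 'x) list \<times> ('n \<Rightarrow> 'a) list \<Rightarrow> bool) \<Rightarrow> real" where
  "game_cond_prob Xs As T Q1 Q g E F =
     game_prob Xs As T Q1 Q g (\<lambda>h. E h \<and> F h) / game_prob Xs As T Q1 Q g F"

end

theory Submission imports Defs "HOL-Library.FuncSet" begin

lemma tp_PiE: "type_profiles Xs = PiE UNIV Xs"
  unfolding type_profiles_def PiE_UNIV_domain Pi_def by auto
lemma ap_PiE: "action_profiles As = PiE UNIV As"
  unfolding action_profiles_def PiE_UNIV_domain Pi_def by auto

lemma finite_tp: "(\<And>i. finite (Xs i)) \<Longrightarrow> finite (type_profiles (Xs::'n::finite \<Rightarrow> _))"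
  unfolding tp_PiE by (rule finite_PiE) auto
lemma finite_ap: "(\<And>i. finite (As i)) \<Longrightarrow> finite (action_profiles (As::'n::finite \<Rightarrow> _))"
  unfolding ap_PiE by (rule finite_PiE) auto

lemma finite_trajs:
  assumes "\<And>i. finite (Xs i)" "\<And>i. finite (As i)"
  shows "finite (trajs (Xs::'n::finite \<Rightarrow> _) As n)"
proof -
  have "trajs Xs As n \<subseteq> {xs. set xs \<subseteq> type_profiles Xs \<and> length xs = n} \<times> {as. set as \<subseteq> action_profiles As \<and> length as = n}"
    unfolding trajs_def by auto
  moreover have "finite ({xs. set xs \<subseteq> type_profiles Xs \<and> length xs = n} \<times> {as. set as \<subseteq> action_profiles As \<and> length as = n})"
    using finite_tp[OF assms(1)] finite_ap[OF assms(2)] by (intro finite_cartesian_product finite_lists_length_eq)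
  ultimately show ?thesis by (rule finite_subset)
qed

lemma sum_prod_ap:
  assumes "\<And>i. finite (As i)"
  shows "(\<Sum>a\<in>action_profiles (As::'n::finite \<Rightarrow> _). \<Prod>i\<in>UNIV. (f i (a i)::real)) = (\<Prod>i\<in>UNIV. \<Sum>b\<in>As i. f i b)"
  unfolding ap_PiE using prod_sum_PiE[of UNIV As f] assms by simp

lemma sum_prod_tp:
  assumes "\<And>i. finite (Xs i)"
  shows "(\<Sum>a\<in>type_profiles (Xs::'n::finite \<Rightarrow> _). \<Prod>i\<in>UNIV. (f i (a i)::real)) = (\<Prod>i\<in>UNIV. \<Sum>b\<in>Xs i. f i b)"
  unfolding tp_PiE using prod_sum_PiE[of UNIV Xs f] assms by simp

lemma traj_weight_snoc:
  assumes "length xs = n" "length as = n" "1 \<le> n"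
  shows "traj_weight Q1 Q g (xs @ [x]) (as @ [a]) = traj_weight Q1 Q g xs as *
     (\<Prod>i\<in>UNIV. g i as (map (\<lambda>x. x i) (xs @ [x])) (a i)) *
     (\<Prod>i\<in>UNIV. Q i (n + 1) (last xs i) (last as) (x i))"
proof -
  have ne: "xs \<noteq> []" "as \<noteq> []" using assms by auto
  have h1: "(\<Prod>s<length (as@[a]). \<Prod>i\<in>UNIV. g i (take s (as@[a])) (map (\<lambda>x. x i) (take (Suc s) (xs@[x]))) (((as@[a]) ! s) i))
    = (\<Prod>s<length as. \<Prod>i\<in>UNIV. g i (take s as) (map (\<lambda>x. x i) (take (Suc s) xs)) ((as ! s) i)) *
      (\<Prod>i\<in>UNIV. g i as (map (\<lambda>x. x i) (xs @ [x])) (a i))"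
    using assms by (simp add: prod.lessThan_Suc nth_append)
  have h2: "(\<Prod>s<length (xs@[x]) - 1. \<Prod>i\<in>UNIV. Q i (s + 2) (((xs@[x]) ! s) i) ((as@[a]) ! s) (((xs@[x]) ! Suc s) i))
    = (\<Prod>s<length xs - 1. \<Prod>i\<in>UNIV. Q i (s + 2) ((xs ! s) i) (as ! s) ((xs ! Suc s) i)) *
      (\<Prod>i\<in>UNIV. Q i (n + 1) (last xs i) (last as) (x i))"
  proof -
    obtain m where m: "n = Suc m" using assms by (cases n) auto
    show ?thesis using assms m ne
      by (simp add: prod.lessThan_Suc nth_append last_conv_nth)
  qed
  show ?thesis unfolding traj_weight_def h1 h2 using ne by (simp add: mult_ac)
qed

lemma future_step:
  assumes model: "valid_model Xs As T Q1 Q" and strat: "valid_strategy Xs As T g"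
    and n: "1 \<le> n" "Suc n \<le> T"
    and h: "length xs = n" "length as = n" "set xs \<subseteq> type_profiles Xs" "set as \<subseteq> action_profiles As"
  shows "(\<Sum>x\<in>type_profiles Xs. \<Sum>a\<in>action_profiles As.
            traj_weight Q1 Q g (xs @ [x]) (as @ [a])) = traj_weight Q1 Q g xs as"
proof -
  have fin: "\<And>i. finite (Xs i)" "\<And>i. finite (As i)" using model unfolding valid_model_def by auto
  have ne: "xs \<noteq> []" "as \<noteq> []" using h n by auto
  have lx: "last xs \<in> type_profiles Xs" using h(3) ne by auto
  have la: "last as \<in> action_profiles As" using h(4) ne by auto
  have G: "(\<Sum>a\<in>action_profiles As. \<Prod>i\<in>UNIV. g i as (map (\<lambda>x. x i) (xs @ [x])) (a i)) = 1"
    if x: "x \<in> type_profiles Xs" for x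
  proof -
    have "(\<Sum>a\<in>action_profiles As. \<Prod>i\<in>UNIV. g i as (map (\<lambda>x. x i) (xs @ [x])) (a i))
        = (\<Prod>i\<in>UNIV. \<Sum>b\<in>As i. g i as (map (\<lambda>x. x i) (xs @ [x])) b)"
      by (rule sum_prod_ap[OF fin(2)])
    also have "\<dots> = (\<Prod>i\<in>(UNIV::'a set). 1)"
    proof (rule prod.cong[OF refl])
      fix i
      have "set (map (\<lambda>x. x i) (xs @ [x])) \<subseteq> Xs i" using h(3) x unfolding type_profiles_def by auto
      then show "(\<Sum>b\<in>As i. g i as (map (\<lambda>x. x i) (xs @ [x])) b) = 1"
        using strat h n unfolding valid_strategy_def by auto
    qed
    finally show ?thesis by simp
  qed
  have Qs: "(\<Sum>x\<in>type_profiles Xs. \<Prod>i\<in>UNIV. Q i (n + 1) (last xs i) (last as) (x i)) = 1"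
  proof -
    have "(\<Sum>x\<in>type_profiles Xs. \<Prod>i\<in>UNIV. Q i (n + 1) (last xs i) (last as) (x i))
        = (\<Prod>i\<in>UNIV. \<Sum>b\<in>Xs i. Q i (n + 1) (last xs i) (last as) b)"
      by (rule sum_prod_tp[OF fin(1)])
    also have "\<dots> = (\<Prod>i\<in>(UNIV::'a set). 1)"
    proof (rule prod.cong[OF refl])
      fix i
      have "last xs i \<in> Xs i" using lx unfolding type_profiles_def by auto
      then show "(\<Sum>b\<in>Xs i. Q i (n + 1) (last xs i) (last as) b) = 1"
        using model n la unfolding valid_model_def by auto
    qed
    finally show ?thesis by simp
  qed
  have "(\<Sum>x\<in>type_profiles Xs. \<Sum>a\<in>action_profiles As. traj_weight Q1 Q g (xs @ [x]) (as @ [a]))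
     = (\<Sum>x\<in>type_profiles Xs. traj_weight Q1 Q g xs as * (\<Prod>i\<in>UNIV. Q i (n + 1) (last xs i) (last as) (x i)) *
          (\<Sum>a\<in>action_profiles As. \<Prod>i\<in>UNIV. g i as (map (\<lambda>x. x i) (xs @ [x])) (a i)))"
    using h n by (simp add: traj_weight_snoc sum_distrib_left mult_ac)
  also have "\<dots> = (\<Sum>x\<in>type_profiles Xs. traj_weight Q1 Q g xs as * (\<Prod>i\<in>UNIV. Q i (n + 1) (last xs i) (last as) (x i)))"
    using G by simp
  also have "\<dots> = traj_weight Q1 Q g xs as"
    using Qs by (simp add: sum_distrib_left[symmetric])
  finally show ?thesis .
qed

lemma future:
  assumes model: "valid_model Xs As T Q1 Q" and strat: "valid_strategy Xs As T g"
    and t: "1 \<le> t" and p: "(px, pa) \<in> trajs Xs As t" and tn: "t \<le> n"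
  shows "n \<le> T \<Longrightarrow> (\<Sum>h\<in>{h\<in>trajs Xs As n. take t (fst h) = px \<and> take t (snd h) = pa}.
            traj_weight Q1 Q g (fst h) (snd h)) = traj_weight Q1 Q g px pa"
  using tn
proof (induction n rule: dec_induct)
  case base
  have "{h\<in>trajs Xs As t. take t (fst h) = px \<and> take t (snd h) = pa} = {(px, pa)}"
    using p unfolding trajs_def by auto
  then show ?case by simp
next
  case (step n)
  have fin: "\<And>i. finite (Xs i)" "\<And>i. finite (As i)" using model unfolding valid_model_def by auto
  define S where "S m = {h\<in>trajs Xs As m. take t (fst h) = px \<and> take t (snd h) = pa}" for m
  define f where "f = (\<lambda>(h::('a \<Rightarrow> 'b) list \<times> ('a \<Rightarrow> 'c) list, (x::'a \<Rightarrow> 'b, a::'a \<Rightarrow> 'c)). (fst h @ [x], snd h @ [a]))"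
  have img: "S (Suc n) = f ` (S n \<times> (type_profiles Xs \<times> action_profiles As))"
  proof
    show "f ` (S n \<times> (type_profiles Xs \<times> action_profiles As)) \<subseteq> S (Suc n)"
      using step(1) unfolding S_def f_def trajs_def by auto
  next
    show "S (Suc n) \<subseteq> f ` (S n \<times> (type_profiles Xs \<times> action_profiles As))"
    proof
      fix h assume h: "h \<in> S (Suc n)"
      obtain xs as where hh: "h = (xs, as)" by (cases h)
      have ne: "xs \<noteq> []" "as \<noteq> []" using h hh unfolding S_def trajs_def by auto
      have xs: "xs = butlast xs @ [last xs]" and as: "as = butlast as @ [last as]" using ne by auto
      have "(butlast xs, butlast as) \<in> S n"
        using h hh step(1) unfolding S_def trajs_def
        by (auto simp: take_butlast dest: in_set_butlastD)
      moreover have "last xs \<in> type_profiles Xs" "last as \<in> action_profiles As"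
        using h hh ne unfolding S_def trajs_def by auto
      ultimately show "h \<in> f ` (S n \<times> (type_profiles Xs \<times> action_profiles As))"
        unfolding f_def hh
        by (intro image_eqI[where x="((butlast xs, butlast as), (last xs, last as))"]) (use xs as in auto)
    qed
  qed
  have inj: "inj_on f (S n \<times> (type_profiles Xs \<times> action_profiles As))"
    unfolding S_def trajs_def f_def inj_on_def by auto
  have "(\<Sum>h\<in>S (Suc n). traj_weight Q1 Q g (fst h) (snd h))
      = (\<Sum>z\<in>S n \<times> (type_profiles Xs \<times> action_profiles As). traj_weight Q1 Q g (fst (f z)) (snd (f z)))"
    unfolding img by (subst sum.reindex[OF inj]) (simp add: comp_def)
  also have "\<dots> = (\<Sum>h\<in>S n. \<Sum>x\<in>type_profiles Xs. \<Sum>a\<in>action_profiles As.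
        traj_weight Q1 Q g (fst h @ [x]) (snd h @ [a]))"
    by (simp add: sum.cartesian_product f_def case_prod_beta)
  also have "\<dots> = (\<Sum>h\<in>S n. traj_weight Q1 Q g (fst h) (snd h))"
  proof (rule sum.cong[OF refl])
    fix h assume h: "h \<in> S n"
    show "(\<Sum>x\<in>type_profiles Xs. \<Sum>a\<in>action_profiles As. traj_weight Q1 Q g (fst h @ [x]) (snd h @ [a]))
        = traj_weight Q1 Q g (fst h) (snd h)"
      using h step t by (intro future_step[OF model strat]) (auto simp: S_def trajs_def)
  qed
  also have "\<dots> = traj_weight Q1 Q g px pa" using step by (simp add: S_def)
  finally show ?case unfolding S_def .
qed

lemma reduce:
  assumes model: "valid_model Xs As T Q1 Q" and strat: "valid_strategy Xs As T g"
    and t: "1 \<le> t" "t \<le> T"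
    and E: "\<forall>h\<in>trajs Xs As T. E h = E (take t (fst h), take t (snd h))"
  shows "game_prob Xs As T Q1 Q g E = (\<Sum>p\<in>{p\<in>trajs Xs As t. E p}. traj_weight Q1 Q g (fst p) (snd p))"
proof -
  have fin: "\<And>i. finite (Xs i)" "\<And>i. finite (As i)" using model unfolding valid_model_def by auto
  have ft: "\<And>n. finite (trajs Xs As n)" by (rule finite_trajs) (use fin in auto)
  define pre where "pre h = (take t (fst h), take t (snd h))" for h :: "('a \<Rightarrow> 'b) list \<times> ('a \<Rightarrow> 'c) list"
  have sub: "pre ` {h\<in>trajs Xs As T. E h} \<subseteq> {p\<in>trajs Xs As t. E p}"
    using E t unfolding pre_def trajs_def by auto (meson in_set_takeD subsetD)+
  have "game_prob Xs As T Q1 Q g E = (\<Sum>p\<in>{p\<in>trajs Xs As t. E p}.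
      \<Sum>h\<in>{h. h \<in> {h\<in>trajs Xs As T. E h} \<and> pre h = p}. traj_weight Q1 Q g (fst h) (snd h))"
    unfolding game_prob_def
    by (rule sum.group[symmetric]) (use ft sub in auto)
  also have "\<dots> = (\<Sum>p\<in>{p\<in>trajs Xs As t. E p}. traj_weight Q1 Q g (fst p) (snd p))"
  proof (rule sum.cong[OF refl])
    fix p assume p: "p \<in> {p\<in>trajs Xs As t. E p}"
    obtain px pa where pp: "p = (px, pa)" by (cases p)
    have "{h. h \<in> {h\<in>trajs Xs As T. E h} \<and> pre h = p} =
          {h\<in>trajs Xs As T. take t (fst h) = px \<and> take t (snd h) = pa}"
      using E p pp unfolding pre_def by auto
    moreover have "(\<Sum>h\<in>{h\<in>trajs Xs As T. take t (fst h) = px \<and> take t (snd h) = pa}.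
            traj_weight Q1 Q g (fst h) (snd h)) = traj_weight Q1 Q g px pa"
      using future[OF model strat t(1), of px pa T] p pp t by auto
    ultimately show "(\<Sum>h\<in>{h. h \<in> {h\<in>trajs Xs As T. E h} \<and> pre h = p}. traj_weight Q1 Q g (fst h) (snd h))
        = traj_weight Q1 Q g (fst p) (snd p)" using pp by simp
  qed
  finally show ?thesis .
qed

definition mixf :: "'n \<Rightarrow> ('n \<Rightarrow> 'b) \<Rightarrow> ('n \<Rightarrow> 'b) \<Rightarrow> ('n \<Rightarrow> 'b)" where
  "mixf i f h = (\<lambda>j. if j = i then f j else h j)"
definition mixl :: "'n \<Rightarrow> ('n \<Rightarrow> 'b) list \<Rightarrow> ('n \<Rightarrow> 'b) list \<Rightarrow> ('n \<Rightarrow> 'b) list" where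
  "mixl i xs ys = map2 (mixf i) xs ys"

lemma mixf_same[simp]: "mixf i f f = f" unfolding mixf_def by auto
lemma mixf_app[simp]: "mixf i f h j = (if j = i then f j else h j)" unfolding mixf_def by auto
lemma mixl_length[simp]: "length (mixl i xs ys) = min (length xs) (length ys)" unfolding mixl_def by simp
lemma mixl_nth[simp]: "k < length xs \<Longrightarrow> k < length ys \<Longrightarrow> mixl i xs ys ! k = mixf i (xs ! k) (ys ! k)"
  unfolding mixl_def by simp
lemma mixl_take: "take k (mixl i xs ys) = mixl i (take k xs) (take k ys)"
  unfolding mixl_def by (simp add: take_map take_zip)
lemma mixl_same[simp]: "mixl i xs xs = xs"
  unfolding mixl_def by (induction xs) auto
lemma mixl_col: "length xs = length ys \<Longrightarrow>
   map (\<lambda>x. x j) (mixl i xs ys) = (if j = i then map (\<lambda>x. x j) xs else map (\<lambda>x. x j) ys)"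
  by (auto intro: nth_equalityI)
lemma mixl_hd: "xs \<noteq> [] \<Longrightarrow> ys \<noteq> [] \<Longrightarrow> hd (mixl i xs ys) = mixf i (hd xs) (hd ys)"
  by (cases xs; cases ys) (auto simp: mixl_def)

definition Wj where
  "Wj Q1 Q g j xs as = Q1 j (hd xs j) *
     (\<Prod>s<length as. g j (take s as) (map (\<lambda>x. x j) (take (Suc s) xs)) ((as ! s) j)) *
     (\<Prod>s<length xs - 1. Q j (s + 2) ((xs ! s) j) (as ! s) ((xs ! Suc s) j))"

lemma tw_prod: "traj_weight Q1 Q g xs as = (\<Prod>j\<in>UNIV. Wj Q1 Q g j xs as)"
proof -
  have a: "(\<Prod>s<length as. \<Prod>i\<in>UNIV. g i (take s as) (map (\<lambda>x. x i) (take (Suc s) xs)) ((as ! s) i))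
     = (\<Prod>i\<in>UNIV. \<Prod>s<length as. g i (take s as) (map (\<lambda>x. x i) (take (Suc s) xs)) ((as ! s) i))"
    by (rule prod.swap)
  have b: "(\<Prod>s<length xs - 1. \<Prod>i\<in>UNIV. Q i (s + 2) ((xs ! s) i) (as ! s) ((xs ! Suc s) i))
     = (\<Prod>i\<in>UNIV. \<Prod>s<length xs - 1. Q i (s + 2) ((xs ! s) i) (as ! s) ((xs ! Suc s) i))"
    by (rule prod.swap)
  show ?thesis unfolding traj_weight_def Wj_def prod.distrib a b ..
qed

lemma Wj_mix:
  assumes len: "length px = t" "length qx = t" "length pa = t" "length qa = t" and t: "1 \<le> t"
    and tk: "take (t - 1) pa = take (t - 1) qa"
  shows "Wj Q1 Q g j (mixl i px qx) (mixl i pa qa) = (if j = i then Wj Q1 Q g j px pa else Wj Q1 Q g j qx qa)"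
proof -
  have tks: "take s (mixl i pa qa) = take s pa" "take s (mixl i pa qa) = take s qa" if "s < t" for s
  proof -
    have "take s pa = take s (take (t - 1) pa)" using that by simp
    also have "\<dots> = take s qa" using tk that by simp
    finally have e: "take s pa = take s qa" .
    show "take s (mixl i pa qa) = take s pa" "take s (mixl i pa qa) = take s qa"
      using e by (simp_all add: mixl_take)
  qed
  have nths: "pa ! s = qa ! s" if "s < t - 1" for s
  proof -
    have "pa ! s = take (t - 1) pa ! s" using that by simp
    also have "\<dots> = qa ! s" using tk that by simp
    finally show ?thesis .
  qed
  have ne: "px \<noteq> []" "qx \<noteq> []" using len t by auto
  have colt: "map (\<lambda>x. x j) (take (Suc s) (mixl i px qx)) =
      (if j = i then map (\<lambda>x. x j) (take (Suc s) px) else map (\<lambda>x. x j) (take (Suc s) qx))" for s j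
    using len by (simp add: mixl_take mixl_col)
  show ?thesis
  proof (cases "j = i")
    case True
    have g: "(\<Prod>s<length (mixl i pa qa). g j (take s (mixl i pa qa)) (map (\<lambda>x. x j) (take (Suc s) (mixl i px qx))) ((mixl i pa qa ! s) j))
      = (\<Prod>s<length pa. g j (take s pa) (map (\<lambda>x. x j) (take (Suc s) px)) ((pa ! s) j))"
      using len True by (intro prod.cong) (auto simp: tks colt)
    have q: "(\<Prod>s<length (mixl i px qx) - 1. Q j (s + 2) ((mixl i px qx ! s) j) (mixl i pa qa ! s) ((mixl i px qx ! Suc s) j))
      = (\<Prod>s<length px - 1. Q j (s + 2) ((px ! s) j) (pa ! s) ((px ! Suc s) j))"
      using len True by (intro prod.cong) (auto simp: nths)
    show ?thesis unfolding Wj_def g q using True ne by (simp add: mixl_hd)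
  next
    case False
    have g: "(\<Prod>s<length (mixl i pa qa). g j (take s (mixl i pa qa)) (map (\<lambda>x. x j) (take (Suc s) (mixl i px qx))) ((mixl i pa qa ! s) j))
      = (\<Prod>s<length qa. g j (take s qa) (map (\<lambda>x. x j) (take (Suc s) qx)) ((qa ! s) j))"
      using len False by (intro prod.cong) (auto simp: tks(2) colt)
    have q: "(\<Prod>s<length (mixl i px qx) - 1. Q j (s + 2) ((mixl i px qx ! s) j) (mixl i pa qa ! s) ((mixl i px qx ! Suc s) j))
      = (\<Prod>s<length qx - 1. Q j (s + 2) ((qx ! s) j) (qa ! s) ((qx ! Suc s) j))"
      using len False by (intro prod.cong) (auto simp: nths)
    show ?thesis unfolding Wj_def g q using False ne by (simp add: mixl_hd)
  qed
qed

lemma Wj_eq: "g1 j = g2 j \<Longrightarrow> Wj Q1 Q g1 j xs as = Wj Q1 Q g2 j xs as"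
  unfolding Wj_def by simp

lemma tw_mix:
  assumes len: "length px = t" "length qx = t" "length pa = t" "length qa = t" and t: "1 \<le> t"
    and tk: "take (t - 1) pa = take (t - 1) qa"
    and gs: "\<forall>j. j \<noteq> i \<longrightarrow> g1 j = g2 j"
  shows "traj_weight Q1 Q g1 (mixl i px qx) (mixl i pa qa) * traj_weight Q1 Q g2 (mixl i qx px) (mixl i qa pa)
       = traj_weight Q1 Q g1 px pa * traj_weight Q1 Q g2 qx qa"
  unfolding tw_prod prod.distrib[symmetric]
proof (rule prod.cong[OF refl])
  fix j
  show "Wj Q1 Q g1 j (mixl i px qx) (mixl i pa qa) * Wj Q1 Q g2 j (mixl i qx px) (mixl i qa pa) =
        Wj Q1 Q g1 j px pa * Wj Q1 Q g2 j qx qa"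
    using Wj_mix[OF len t tk, of Q1 Q g1 j i] Wj_mix[OF len(2,1,4,3) t tk[symmetric], of Q1 Q g2 j i]
      Wj_eq[of g1 j g2 Q1 Q px pa] Wj_eq[of g1 j g2 Q1 Q qx qa] gs
    by (cases "j = i") auto
qed

definition mix :: "'n \<Rightarrow> ('n \<Rightarrow> 'b) list \<times> ('n \<Rightarrow> 'c) list \<Rightarrow> ('n \<Rightarrow> 'b) list \<times> ('n \<Rightarrow> 'c) list
   \<Rightarrow> ('n \<Rightarrow> 'b) list \<times> ('n \<Rightarrow> 'c) list" where
  "mix i p q = (mixl i (fst p) (fst q), mixl i (snd p) (snd q))"

lemma mixl_invol: "length xs = length ys \<Longrightarrow> mixl i (mixl i xs ys) (mixl i ys xs) = xs"
  by (rule nth_equalityI) (auto simp: mixf_def)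

lemma mixl_set_tp:
  assumes "length xs = length ys" "set xs \<subseteq> type_profiles Xs" "set ys \<subseteq> type_profiles Xs"
  shows "set (mixl i xs ys) \<subseteq> type_profiles Xs"
proof
  fix x assume "x \<in> set (mixl i xs ys)"
  then obtain k where k: "k < length xs" "x = mixl i xs ys ! k" using assms(1) by (auto simp: in_set_conv_nth)
  have a: "xs ! k \<in> type_profiles Xs" "ys ! k \<in> type_profiles Xs" using k assms by (auto intro!: subsetD[OF _ nth_mem])
  show "x \<in> type_profiles Xs" using k a assms(1) unfolding type_profiles_def by auto
qed

lemma mixl_set_ap:
  assumes "length xs = length ys" "set xs \<subseteq> action_profiles As" "set ys \<subseteq> action_profiles As"
  shows "set (mixl i xs ys) \<subseteq> action_profiles As"
proof
  fix x assume "x \<in> set (mixl i xs ys)"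
  then obtain k where k: "k < length xs" "x = mixl i xs ys ! k" using assms(1) by (auto simp: in_set_conv_nth)
  have a: "xs ! k \<in> action_profiles As" "ys ! k \<in> action_profiles As" using k assms by (auto intro!: subsetD[OF _ nth_mem])
  show "x \<in> action_profiles As" using k a assms(1) unfolding action_profiles_def by auto
qed

lemma mix_sum:
  fixes f :: "_ \<Rightarrow> _ \<Rightarrow> real" and D :: "(('n::finite \<Rightarrow> 'x) list \<times> ('n \<Rightarrow> 'a) list) set"
  assumes t: "1 \<le> t" and gs: "\<forall>j. j \<noteq> i \<longrightarrow> g1 j = g2 j"
    and D: "D = {p\<in>trajs Xs As t. take (t - 1) (snd p) = ah}"
  shows "(\<Sum>p\<in>D. \<Sum>q\<in>D. f (mix i p q) (mix i q p) * traj_weight Q1 Q g1 (fst p) (snd p) * traj_weight Q1 Q g2 (fst q) (snd q))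
       = (\<Sum>p\<in>D. \<Sum>q\<in>D. f p q * traj_weight Q1 Q g1 (fst p) (snd p) * traj_weight Q1 Q g2 (fst q) (snd q))"
proof -
  define \<sigma> where "\<sigma> = (\<lambda>(p::('n \<Rightarrow> 'x) list \<times> ('n \<Rightarrow> 'a) list, q). (mix i p q, mix i q p))"
  have inD: "mix i p q \<in> D" if "p \<in> D" "q \<in> D" for p q
  proof -
    obtain px pa where p: "p = (px, pa)" by (cases p)
    obtain qx qa where q: "q = (qx, qa)" by (cases q)
    have l: "length px = length qx" "length pa = length qa" using that unfolding D p q trajs_def by auto
    have s1: "set (mixl i px qx) \<subseteq> type_profiles Xs"
      by (rule mixl_set_tp[OF l(1)]) (use that in \<open>auto simp: D p q trajs_def\<close>)
    have s2: "set (mixl i pa qa) \<subseteq> action_profiles As"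
      by (rule mixl_set_ap[OF l(2)]) (use that in \<open>auto simp: D p q trajs_def\<close>)
    show ?thesis using that s1 s2 unfolding D p q mix_def trajs_def
      by (auto simp: mixl_take)
  qed
  have inv: "\<sigma> (\<sigma> z) = z" if "z \<in> D \<times> D" for z
  proof -
    obtain px pa qx qa where z: "z = ((px, pa), (qx, qa))" by (metis prod.collapse)
    show ?thesis using that unfolding z \<sigma>_def mix_def D trajs_def by (auto simp: mixl_invol)
  qed
  have inS: "\<sigma> z \<in> D \<times> D" if "z \<in> D \<times> D" for z
    using that inD unfolding \<sigma>_def by auto
  have eq: "(\<lambda>(p, q). f (mix i p q) (mix i q p) * traj_weight Q1 Q g1 (fst p) (snd p) * traj_weight Q1 Q g2 (fst q) (snd q)) (\<sigma> z)
     = (\<lambda>(p, q). f p q * traj_weight Q1 Q g1 (fst p) (snd p) * traj_weight Q1 Q g2 (fst q) (snd q)) z"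
    if "z \<in> D \<times> D" for z
  proof -
    obtain px pa qx qa where z: "z = ((px, pa), (qx, qa))" by (metis prod.collapse)
    have len: "length px = t" "length qx = t" "length pa = t" "length qa = t"
      and tk: "take (t - 1) pa = take (t - 1) qa"
      using that unfolding z D trajs_def by auto
    have "\<sigma> (\<sigma> z) = z" using inv that .
    then have ff: "f (mix i (mix i (px, pa) (qx, qa)) (mix i (qx, qa) (px, pa))) (mix i (mix i (qx, qa) (px, pa)) (mix i (px, pa) (qx, qa)))
        = f (px, pa) (qx, qa)" unfolding z \<sigma>_def by simp
    show ?thesis unfolding z \<sigma>_def
      using ff tw_mix[OF len t tk gs, of Q1 Q]
      by (simp add: mix_def mult_ac)
  qed
  show ?thesis
    unfolding sum.cartesian_product
    by (rule sym, rule sum.reindex_bij_witness[where i=\<sigma> and j=\<sigma>]) (use inv inS eq in auto)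
qed

lemma fun_eq_split: "(f = h) \<longleftrightarrow> f i = h i \<and> (\<forall>j. j \<noteq> i \<longrightarrow> f j = h j)"
  by auto

lemma lastcol: "length xs = t \<Longrightarrow> 1 \<le> t \<Longrightarrow> last (map (\<lambda>x. x i) xs) = (xs ! (t - 1)) i"
  by (cases "xs = []") (auto simp: last_map last_conv_nth)

lemma tw_nonneg:
  assumes model: "valid_model Xs As T Q1 Q" and strat: "valid_strategy Xs As T g"
    and h: "(xs, as) \<in> trajs Xs As n" and n: "1 \<le> n" "n \<le> T"
  shows "0 \<le> traj_weight Q1 Q g xs as"
proof -
  have len: "length xs = n" "length as = n" and sx: "set xs \<subseteq> type_profiles Xs" and sa: "set as \<subseteq> action_profiles As"
    using h unfolding trajs_def by auto
  have xin: "(xs ! k) j \<in> Xs j" if "k < n" for k j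
    using sx len that unfolding type_profiles_def by (auto dest!: nth_mem[of k xs])
  have ain: "as ! k \<in> action_profiles As" if "k < n" for k
    using sa len that by auto
  have ain': "(as ! k) j \<in> As j" if "k < n" for k j
    using ain[OF that] unfolding action_profiles_def by auto
  have a: "0 \<le> Q1 j (hd xs j)" for j
  proof -
    have "xs \<noteq> []" using len n by auto
    then have "hd xs = xs ! 0" by (simp add: hd_conv_nth)
    then show ?thesis using model xin[of 0 j] n unfolding valid_model_def by auto
  qed
  have b: "0 \<le> g j (take s as) (map (\<lambda>x. x j) (take (Suc s) xs)) ((as ! s) j)" if "s < n" for s j
  proof -
    have "set (take s as) \<subseteq> action_profiles As" using sa by (meson order_trans set_take_subset)
    moreover have "set (map (\<lambda>x. x j) (take (Suc s) xs)) \<subseteq> Xs j"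
      using sx unfolding type_profiles_def by (auto dest!: in_set_takeD)
    ultimately show ?thesis using strat that len n ain'[OF that, of j] unfolding valid_strategy_def by auto
  qed
  have c: "0 \<le> Q j (s + 2) ((xs ! s) j) (as ! s) ((xs ! Suc s) j)" if "s < n - 1" for s j
    using model that n xin[of s j] xin[of "Suc s" j] ain[of s] unfolding valid_model_def by auto
  show ?thesis unfolding traj_weight_def using a b c len
    by (intro mult_nonneg_nonneg prod_nonneg) auto
qed

lemma pd_prod:
  fixes w1 w2 :: "_ \<Rightarrow> real"
  shows "(\<Sum>p\<in>D. if A p then w1 p else 0) * (\<Sum>q\<in>D. if B q then w2 q else 0)
     = (\<Sum>p\<in>D. \<Sum>q\<in>D. (if A p \<and> B q then 1 else 0) * w1 p * w2 q)"
  unfolding sum_product by (intro sum.cong refl) auto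

theorem claim4:
  fixes Xs :: "'n::finite \<Rightarrow> 'x set" and As :: "'n \<Rightarrow> 'a set" and T :: nat
    and Q1 :: "'n \<Rightarrow> 'x \<Rightarrow> real"
    and Q :: "'n \<Rightarrow> nat \<Rightarrow> 'x \<Rightarrow> ('n \<Rightarrow> 'a) \<Rightarrow> 'x \<Rightarrow> real"
    and g :: "'n \<Rightarrow> ('n \<Rightarrow> 'a) list \<Rightarrow> 'x list \<Rightarrow> 'a \<Rightarrow> real"
    and i :: 'n and t :: nat
    and ah :: "('n \<Rightarrow> 'a) list" and xih :: "'x list" and ai :: 'a
    and xtl :: "'n \<Rightarrow> 'x" and atl :: "'n \<Rightarrow> 'a"
  assumes model: "valid_model Xs As T Q1 Q"
    and strat: "valid_strategy Xs As T g"
    and t_range: "1 \<le> t" "t \<le> T"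
    and ah: "length ah = t - 1" "set ah \<subseteq> action_profiles As"
    and xih: "length xih = t" "set xih \<subseteq> Xs i"
    and ai: "ai \<in> As i"
    and pos: "game_prob Xs As T Q1 Q g
                (\<lambda>(xs, as). take (t - 1) as = ah \<and> map (\<lambda>x. x i) (take t xs) = xih
                            \<and> (as ! (t - 1)) i = ai) > 0"
    and xtl: "xtl \<in> type_profiles Xs" and atl: "atl \<in> action_profiles As"
  shows
    "game_cond_prob Xs As T Q1 Q g
        (\<lambda>(xs, as). xs ! (t - 1) = xtl \<and> as ! (t - 1) = atl)
        (\<lambda>(xs, as). take (t - 1) as = ah \<and> map (\<lambda>x. x i) (take t xs) = xih
                    \<and> (as ! (t - 1)) i = ai)
     = (if xtl i = last xih \<and> atl i = ai then 1 else 0) *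
       game_cond_prob Xs As T Q1 Q g
        (\<lambda>(xs, as). \<forall>j. j \<noteq> i \<longrightarrow> (xs ! (t - 1)) j = xtl j \<and> (as ! (t - 1)) j = atl j)
        (\<lambda>(xs, as). take (t - 1) as = ah)
     \<and> (\<forall>g'. valid_strategy Xs As T g' \<and> (\<forall>j. j \<noteq> i \<longrightarrow> g' j = g j) \<and>
            game_prob Xs As T Q1 Q g' (\<lambda>(xs, as). take (t - 1) as = ah) > 0 \<longrightarrow>
            game_cond_prob Xs As T Q1 Q g'
              (\<lambda>(xs, as). \<forall>j. j \<noteq> i \<longrightarrow> (xs ! (t - 1)) j = xtl j \<and> (as ! (t - 1)) j = atl j)
              (\<lambda>(xs, as). take (t - 1) as = ah)
            = game_cond_prob Xs As T Q1 Q g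
              (\<lambda>(xs, as). \<forall>j. j \<noteq> i \<longrightarrow> (xs ! (t - 1)) j = xtl j \<and> (as ! (t - 1)) j = atl j)
              (\<lambda>(xs, as). take (t - 1) as = ah))"
proof -
  have fin: "\<And>i. finite (Xs i)" "\<And>i. finite (As i)" using model unfolding valid_model_def by auto
  have ft: "\<And>n. finite (trajs Xs As n)" by (rule finite_trajs) (use fin in auto)
  define D where "D = {p\<in>trajs Xs As t. take (t - 1) (snd p) = ah}"
  have finD: "finite D" unfolding D_def using ft by auto
  define PD where "PD gg X = (\<Sum>p\<in>D. if X p then traj_weight Q1 Q gg (fst p) (snd p) else 0)" for gg X
  define FI where "FI p = (map (\<lambda>x. x i) (fst p) = xih \<and> (snd p ! (t - 1)) i = ai)" for p :: "('n \<Rightarrow> 'x) list \<times> ('n \<Rightarrow> 'a) list"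
  define OT where "OT p = (\<forall>j. j \<noteq> i \<longrightarrow> (fst p ! (t - 1)) j = xtl j \<and> (snd p ! (t - 1)) j = atl j)" for p :: "('n \<Rightarrow> 'x) list \<times> ('n \<Rightarrow> 'a) list"
  define cond where "cond = (xtl i = last xih \<and> atl i = ai)"
  have red: "game_prob Xs As T Q1 Q gg E = PD gg X"
    if "valid_strategy Xs As T gg" "\<forall>h\<in>trajs Xs As T. E h = E (take t (fst h), take t (snd h))"
       "{p\<in>trajs Xs As t. E p} = {p\<in>D. X p}" for gg E X
  proof -
    have "game_prob Xs As T Q1 Q gg E = (\<Sum>p\<in>{p\<in>trajs Xs As t. E p}. traj_weight Q1 Q gg (fst p) (snd p))"
      by (rule reduce[OF model that(1) t_range that(2)])
    also have "\<dots> = PD gg X" unfolding that(3) PD_def by (rule sum.inter_filter[OF finD])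
    finally show ?thesis .
  qed
  have p2: "game_prob Xs As T Q1 Q g (\<lambda>(xs, as). take (t - 1) as = ah \<and> map (\<lambda>x. x i) (take t xs) = xih
                            \<and> (as ! (t - 1)) i = ai) = PD g FI"
    by (rule red[OF strat]) (use t_range in \<open>auto simp: trajs_def D_def FI_def min_def\<close>)
  have p1: "game_prob Xs As T Q1 Q g (\<lambda>h. (\<lambda>(xs, as). xs ! (t - 1) = xtl \<and> as ! (t - 1) = atl) h \<and>
     (\<lambda>(xs, as). take (t - 1) as = ah \<and> map (\<lambda>x. x i) (take t xs) = xih
                            \<and> (as ! (t - 1)) i = ai) h) = PD g (\<lambda>p. cond \<and> FI p \<and> OT p)"
  proof (rule red[OF strat])
    show "\<forall>h\<in>trajs Xs As T. ((\<lambda>h. (\<lambda>(xs, as). xs ! (t - 1) = xtl \<and> as ! (t - 1) = atl) h \<and>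
     (\<lambda>(xs, as). take (t - 1) as = ah \<and> map (\<lambda>x. x i) (take t xs) = xih
                            \<and> (as ! (t - 1)) i = ai) h)) h = (\<lambda>h. (\<lambda>(xs, as). xs ! (t - 1) = xtl \<and> as ! (t - 1) = atl) h \<and>
     (\<lambda>(xs, as). take (t - 1) as = ah \<and> map (\<lambda>x. x i) (take t xs) = xih
                            \<and> (as ! (t - 1)) i = ai) h) (take t (fst h), take t (snd h))"
      using t_range by (auto simp: trajs_def min_def)
    show "{p \<in> trajs Xs As t. (\<lambda>h. (\<lambda>(xs, as). xs ! (t - 1) = xtl \<and> as ! (t - 1) = atl) h \<and>
     (\<lambda>(xs, as). take (t - 1) as = ah \<and> map (\<lambda>x. x i) (take t xs) = xih
                            \<and> (as ! (t - 1)) i = ai) h) p} = {p \<in> D. cond \<and> FI p \<and> OT p}"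
    proof (intro Collect_cong iffI)
      fix p assume a: "p \<in> trajs Xs As t \<and> (\<lambda>h. (\<lambda>(xs, as). xs ! (t - 1) = xtl \<and> as ! (t - 1) = atl) h \<and>
     (\<lambda>(xs, as). take (t - 1) as = ah \<and> map (\<lambda>x. x i) (take t xs) = xih
                            \<and> (as ! (t - 1)) i = ai) h) p"
      obtain xs as where p: "p = (xs, as)" by (cases p)
      have l: "length xs = t" using a p by (auto simp: trajs_def)
      have "last xih = (xs ! (t - 1)) i" using a p l lastcol[OF l t_range(1), of i] by auto
      then show "p \<in> D \<and> cond \<and> FI p \<and> OT p" using a p l by (auto simp: D_def cond_def FI_def OT_def)
    next
      fix p assume a: "p \<in> D \<and> cond \<and> FI p \<and> OT p"
      obtain xs as where p: "p = (xs, as)" by (cases p)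
      have l: "length xs = t" using a p by (auto simp: trajs_def D_def)
      have "last xih = (xs ! (t - 1)) i" using a p l lastcol[OF l t_range(1), of i] by (auto simp: FI_def)
      then have "xs ! (t - 1) = xtl" "as ! (t - 1) = atl"
        using a p by (auto simp: cond_def FI_def OT_def fun_eq_split[of _ _ i])
      then show "p \<in> trajs Xs As t \<and> (\<lambda>h. (\<lambda>(xs, as). xs ! (t - 1) = xtl \<and> as ! (t - 1) = atl) h \<and>
     (\<lambda>(xs, as). take (t - 1) as = ah \<and> map (\<lambda>x. x i) (take t xs) = xih
                            \<and> (as ! (t - 1)) i = ai) h) p"
        using a p l by (auto simp: D_def FI_def)
    qed
  qed
  have p3: "game_prob Xs As T Q1 Q gg (\<lambda>h. (\<lambda>(xs, as). \<forall>j. j \<noteq> i \<longrightarrow> (xs ! (t - 1)) j = xtl j \<and> (as ! (t - 1)) j = atl j) h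
        \<and> (\<lambda>(xs, as). take (t - 1) as = ah) h) = PD gg OT" if "valid_strategy Xs As T gg" for gg
    by (rule red[OF that]) (use t_range in \<open>auto simp: trajs_def D_def OT_def min_def\<close>)
  have p4: "game_prob Xs As T Q1 Q gg (\<lambda>(xs, as). take (t - 1) as = ah) = PD gg (\<lambda>_. True)"
    if "valid_strategy Xs As T gg" for gg
    by (rule red[OF that]) (use t_range in \<open>auto simp: trajs_def D_def min_def\<close>)
  have wnn: "0 \<le> traj_weight Q1 Q gg (fst p) (snd p)" if "valid_strategy Xs As T gg" "p \<in> D" for gg p
    using tw_nonneg[OF model that(1), of "fst p" "snd p" t] that(2) t_range unfolding D_def by auto
  have mFI: "FI (mix i p q) = FI p" if "p \<in> D" "q \<in> D" for p q
  proof -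
    have l: "length (fst p) = t" "length (fst q) = t" "length (snd p) = t" "length (snd q) = t"
      using that unfolding D_def trajs_def by auto
    show ?thesis unfolding FI_def mix_def using l t_range by (simp add: mixl_col)
  qed
  have mOT: "OT (mix i q p) = OT p" if "p \<in> D" "q \<in> D" for p q
  proof -
    have l: "length (fst p) = t" "length (fst q) = t" "length (snd p) = t" "length (snd q) = t"
      using that unfolding D_def trajs_def by auto
    show ?thesis unfolding OT_def mix_def using l t_range by simp
  qed
  have I1: "PD g (\<lambda>p. FI p \<and> OT p) * PD g (\<lambda>_. True) = PD g FI * PD g OT"
  proof -
    have "PD g FI * PD g OT = (\<Sum>p\<in>D. \<Sum>q\<in>D. (if FI p \<and> OT q then 1 else 0) *
        traj_weight Q1 Q g (fst p) (snd p) * traj_weight Q1 Q g (fst q) (snd q))"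
      unfolding PD_def by (rule pd_prod)
    also have "\<dots> = (\<Sum>p\<in>D. \<Sum>q\<in>D. (if FI (mix i p q) \<and> OT (mix i q p) then 1 else 0) *
        traj_weight Q1 Q g (fst p) (snd p) * traj_weight Q1 Q g (fst q) (snd q))"
      by (rule mix_sum[OF t_range(1) _ D_def, symmetric]) simp
    also have "\<dots> = (\<Sum>p\<in>D. \<Sum>q\<in>D. (if (FI p \<and> OT p) \<and> True then 1 else 0) *
        traj_weight Q1 Q g (fst p) (snd p) * traj_weight Q1 Q g (fst q) (snd q))"
      by (intro sum.cong refl) (simp add: mFI mOT)
    also have "\<dots> = PD g (\<lambda>p. FI p \<and> OT p) * PD g (\<lambda>_. True)"
      unfolding PD_def by (rule pd_prod[symmetric])
    finally show ?thesis by simp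
  qed
  have I2: "PD g' OT * PD g (\<lambda>_. True) = PD g OT * PD g' (\<lambda>_. True)"
    if gs: "\<forall>j. j \<noteq> i \<longrightarrow> g' j = g j" for g'
  proof -
    have "PD g' (\<lambda>_. True) * PD g OT = (\<Sum>p\<in>D. \<Sum>q\<in>D. (if True \<and> OT q then 1 else 0) *
        traj_weight Q1 Q g' (fst p) (snd p) * traj_weight Q1 Q g (fst q) (snd q))"
      unfolding PD_def by (rule pd_prod)
    also have "\<dots> = (\<Sum>p\<in>D. \<Sum>q\<in>D. (if True \<and> OT (mix i q p) then 1 else 0) *
        traj_weight Q1 Q g' (fst p) (snd p) * traj_weight Q1 Q g (fst q) (snd q))"
      by (rule mix_sum[OF t_range(1) gs D_def, symmetric])
    also have "\<dots> = (\<Sum>p\<in>D. \<Sum>q\<in>D. (if OT p \<and> True then 1 else 0) *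
        traj_weight Q1 Q g' (fst p) (snd p) * traj_weight Q1 Q g (fst q) (snd q))"
      by (intro sum.cong refl) (simp add: mOT)
    also have "\<dots> = PD g' OT * PD g (\<lambda>_. True)"
      unfolding PD_def by (rule pd_prod[symmetric])
    finally show ?thesis by (simp add: mult.commute)
  qed
  have posF: "PD g FI > 0" using pos p2 by simp
  have "PD g FI \<le> PD g (\<lambda>_. True)"
    unfolding PD_def by (intro sum_mono) (use wnn[OF strat] in auto)
  then have posT: "PD g (\<lambda>_. True) > 0" using posF by linarith
  have c1: "game_cond_prob Xs As T Q1 Q g
        (\<lambda>(xs, as). xs ! (t - 1) = xtl \<and> as ! (t - 1) = atl)
        (\<lambda>(xs, as). take (t - 1) as = ah \<and> map (\<lambda>x. x i) (take t xs) = xih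
                    \<and> (as ! (t - 1)) i = ai)
     = (if xtl i = last xih \<and> atl i = ai then 1 else 0) *
       game_cond_prob Xs As T Q1 Q g
        (\<lambda>(xs, as). \<forall>j. j \<noteq> i \<longrightarrow> (xs ! (t - 1)) j = xtl j \<and> (as ! (t - 1)) j = atl j)
        (\<lambda>(xs, as). take (t - 1) as = ah)"
  proof (cases cond)
    case True
    have e: "PD g (\<lambda>p. cond \<and> FI p \<and> OT p) = PD g (\<lambda>p. FI p \<and> OT p)" using True by simp
    show ?thesis unfolding game_cond_prob_def p1 p2 p3[OF strat] p4[OF strat] e
      using True I1 posF posT unfolding cond_def by (simp add: field_simps)
  next
    case False
    have e: "PD g (\<lambda>p. cond \<and> FI p \<and> OT p) = 0" using False unfolding PD_def by simp
    show ?thesis unfolding game_cond_prob_def p1 p2 e using False unfolding cond_def by auto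
  qed
  have c2: "\<forall>g'. valid_strategy Xs As T g' \<and> (\<forall>j. j \<noteq> i \<longrightarrow> g' j = g j) \<and>
            game_prob Xs As T Q1 Q g' (\<lambda>(xs, as). take (t - 1) as = ah) > 0 \<longrightarrow>
            game_cond_prob Xs As T Q1 Q g'
              (\<lambda>(xs, as). \<forall>j. j \<noteq> i \<longrightarrow> (xs ! (t - 1)) j = xtl j \<and> (as ! (t - 1)) j = atl j)
              (\<lambda>(xs, as). take (t - 1) as = ah)
            = game_cond_prob Xs As T Q1 Q g
              (\<lambda>(xs, as). \<forall>j. j \<noteq> i \<longrightarrow> (xs ! (t - 1)) j = xtl j \<and> (as ! (t - 1)) j = atl j)
              (\<lambda>(xs, as). take (t - 1) as = ah)"
  proof (intro allI impI)
    fix g' assume a: "valid_strategy Xs As T g' \<and> (\<forall>j. j \<noteq> i \<longrightarrow> g' j = g j) \<and>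
            game_prob Xs As T Q1 Q g' (\<lambda>(xs, as). take (t - 1) as = ah) > 0"
    then have v: "valid_strategy Xs As T g'" and gs: "\<forall>j. j \<noteq> i \<longrightarrow> g' j = g j" by auto
    have pos': "PD g' (\<lambda>_. True) > 0" using a p4[OF v] by simp
    show "game_cond_prob Xs As T Q1 Q g'
              (\<lambda>(xs, as). \<forall>j. j \<noteq> i \<longrightarrow> (xs ! (t - 1)) j = xtl j \<and> (as ! (t - 1)) j = atl j)
              (\<lambda>(xs, as). take (t - 1) as = ah)
            = game_cond_prob Xs As T Q1 Q g
              (\<lambda>(xs, as). \<forall>j. j \<noteq> i \<longrightarrow> (xs ! (t - 1)) j = xtl j \<and> (as ! (t - 1)) j = atl j)
              (\<lambda>(xs, as). take (t - 1) as = ah)"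
      unfolding game_cond_prob_def p3[OF v] p4[OF v] p3[OF strat] p4[OF strat]
      using I2[OF gs] pos' posT by (simp add: field_simps)
  qed
  show ?thesis using c1 c2 by blast
qed

end
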